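(* Let $Y=\mu^*(L^* )^T+E$ where $E\in\mathbb{R}^{p\times n}$ has independent standard normal entries, and define the constrained maximum likelihood estimator $$(\widehat{\mu},\widehat{L})\in\operatorname*{argmin}_{(\mu,L)\in\Theta_K}\|Y-\mu L^T\|_F^2,\qquad \Theta_K=\{(\mu,L):\mu\in\mathbb{R}^{p\times K},\,L\in\mathcal{L}_K,\,|\mathrm{supp}(\mu)|\le s\}.$$ Assume $K\log n\lesssim\log p$ and $p/n\to\infty$. Then there is a constant $c>0$ such that $$\sup_{(\mu^*,L^* )\in\Theta^*_K}\mathbb{E}_*\left\{\|\mu^*(L^* )^T-\widehat{\mu}\widehat{L}^T\|_F^2\right\}\le c\,(n\log K+s\log p).$$
   Context: Setting: $n,p,s,K$ are positive integers, $p=p_n$, $s=s_n\to\infty$ and possibly $K=K_n$ depend on $n$, and asymptotics are as $n\to\infty$; $a\lesssim b$ means $a\le C'b$ for a constant $C'>0$ independent of $n$. $\mathcal{L}_K$ is the set of $n\times K$ matrices $L=[l_1,\dots,l_n]^T$ with each row $l_i\in\{0,1\}^K$ having exactly one entry equal to $1$ (cluster-assignment matrices). For $\mu=[\mu_1,\dots,\mu_K]\in\mathbb{R}^{p\times K}$, $\mathrm{supp}(\mu)$ is the set of indices of the nonzero rows of $\mu$. The parameter space is $\Theta^*_K=\{(\mu,L):\mu\in\mathbb{R}^{p\times K},\,L\in\mathcal{L}_K,\,|\mathrm{supp}(\mu)|\le s,\ \|\mu L^T\|_F^2\le C_0 sn,\ \min_{k\ne k'}\|\mu_k-\mu_{k'}\|_2\ge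 c_0\}$ for fixed constants $C_0,c_0>0$. $\mathbb{E}_*$ denotes expectation when the data are generated with parameter $(\mu^*,L^* )$. *)

theory Defs
  imports "HOL-Probability.Probability"
begin

text \<open>Matrices are represented as functions nat => nat => real with explicit
index bounds. mu is p x K (mu j k, j<p, k<K); L is n x K (L i k, i<n, k<K).\<close>

definition fitted :: "nat \<Rightarrow> (nat \<Rightarrow> nat \<Rightarrow> real) \<Rightarrow> (nat \<Rightarrow> nat \<Rightarrow> real) \<Rightarrow> nat \<Rightarrow> nat \<Rightarrow> real" where
  "fitted K mu L = (\<lambda>j i. \<Sum>k<K. mu j k * L i k)"

definition frob2 :: "nat \<Rightarrow> nat \<Rightarrow> (nat \<Rightarrow> nat \<Rightarrow> real) \<Rightarrow> real" where
  "frob2 p n A = (\<Sum>j<p. \<Sum>i<n. (A j i)\<^sup>2)"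

definition assign_mat :: "nat \<Rightarrow> nat \<Rightarrow> (nat \<Rightarrow> nat \<Rightarrow> real) \<Rightarrow> bool" where
  "assign_mat n K L \<longleftrightarrow>
     (\<forall>i<n. (\<forall>k<K. L i k = 0 \<or> L i k = 1) \<and> card {k. k < K \<and> L i k = 1} = 1)"

definition supp_rows :: "nat \<Rightarrow> nat \<Rightarrow> (nat \<Rightarrow> nat \<Rightarrow> real) \<Rightarrow> nat set" where
  "supp_rows p K mu = {j. j < p \<and> (\<exists>k<K. mu j k \<noteq> 0)}"

definition ThetaK :: "nat \<Rightarrow> nat \<Rightarrow> nat \<Rightarrow> nat \<Rightarrow> ((nat \<Rightarrow> nat \<Rightarrow> real) \<times> (nat \<Rightarrow> nat \<Rightarrow> real)) set" where
  "ThetaK n p s K = {(mu, L). assign_mat n K L \<and> card (supp_rows p K mu) \<le> s}"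

definition ThetaStar :: "real \<Rightarrow> real \<Rightarrow> nat \<Rightarrow> nat \<Rightarrow> nat \<Rightarrow> nat \<Rightarrow>
    ((nat \<Rightarrow> nat \<Rightarrow> real) \<times> (nat \<Rightarrow> nat \<Rightarrow> real)) set" where
  "ThetaStar C0 c0 n p s K = {(mu, L). (mu, L) \<in> ThetaK n p s K
      \<and> frob2 p n (fitted K mu L) \<le> C0 * real s * real n
      \<and> (\<forall>k<K. \<forall>k'<K. k \<noteq> k' \<longrightarrow> sqrt (\<Sum>j<p. (mu j k - mu j k')\<^sup>2) \<ge> c0)}"

definition noise :: "nat \<Rightarrow> nat \<Rightarrow> (nat \<times> nat \<Rightarrow> real) measure" where
  "noise p n = PiM ({..<p} \<times> {..<n}) (\<lambda>_. density lborel std_normal_density)"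

definition observe :: "nat \<Rightarrow> (nat \<Rightarrow> nat \<Rightarrow> real) \<Rightarrow> (nat \<Rightarrow> nat \<Rightarrow> real) \<Rightarrow> (nat \<times> nat \<Rightarrow> real)
    \<Rightarrow> nat \<Rightarrow> nat \<Rightarrow> real" where
  "observe K mu L E = (\<lambda>j i. fitted K mu L j i + E (j, i))"

definition is_cmle :: "nat \<Rightarrow> nat \<Rightarrow> nat \<Rightarrow> nat \<Rightarrow>
    ((nat \<Rightarrow> nat \<Rightarrow> real) \<Rightarrow> (nat \<Rightarrow> nat \<Rightarrow> real) \<times> (nat \<Rightarrow> nat \<Rightarrow> real)) \<Rightarrow> bool" where
  "is_cmle n p s K est \<longleftrightarrow> (\<forall>Y. est Y \<in> ThetaK n p s K \<and>
     (\<forall>(mu, L) \<in> ThetaK n p s K.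
        frob2 p n (\<lambda>j i. Y j i - fitted K (fst (est Y)) (snd (est Y)) j i)
          \<le> frob2 p n (\<lambda>j i. Y j i - fitted K mu L j i)))"

definition risk_loss :: "nat \<Rightarrow> nat \<Rightarrow> nat \<Rightarrow>
    ((nat \<Rightarrow> nat \<Rightarrow> real) \<Rightarrow> (nat \<Rightarrow> nat \<Rightarrow> real) \<times> (nat \<Rightarrow> nat \<Rightarrow> real)) \<Rightarrow>
    (nat \<Rightarrow> nat \<Rightarrow> real) \<Rightarrow> (nat \<Rightarrow> nat \<Rightarrow> real) \<Rightarrow> (nat \<times> nat \<Rightarrow> real) \<Rightarrow> real" where
  "risk_loss n p K est mu L E =
     (let est_val = est (observe K mu L E) in
      frob2 p n (\<lambda>j i. fitted K mu L j i - fitted K (fst est_val) (snd est_val) j i))"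

end

theory Submission
  imports Defs
begin

definition ip :: "'i set \<Rightarrow> ('i \<Rightarrow> real) \<Rightarrow> ('i \<Rightarrow> real) \<Rightarrow> real" where
  "ip I a c = (\<Sum>x\<in>I. a x * c x)"

definition proj :: "'i set \<Rightarrow> 'r set \<Rightarrow> ('r \<Rightarrow> 'i \<Rightarrow> real) \<Rightarrow> ('i \<Rightarrow> real) \<Rightarrow> 'i \<Rightarrow> real" where
  "proj I R b z = (\<lambda>x. \<Sum>r\<in>R. ip I z (b r) * b r x)"

definition orthon :: "'i set \<Rightarrow> 'r set \<Rightarrow> ('r \<Rightarrow> 'i \<Rightarrow> real) \<Rightarrow> bool" where
  "orthon I R b \<longleftrightarrow> (\<forall>r\<in>R. \<forall>t\<in>R. ip I (b r) (b t) = (if r = t then 1 else 0))"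

lemma ip_comm: "ip I a c = ip I c a"
  by (simp add: ip_def mult.commute)

lemma ip_diff_left: "ip I (\<lambda>x. a x - c x) e = ip I a e - ip I c e"
  unfolding ip_def by (simp add: sum_subtractf[symmetric] left_diff_distrib)

lemma ip_cong: "(\<And>x. x \<in> I \<Longrightarrow> a x = a' x) \<Longrightarrow> (\<And>x. x \<in> I \<Longrightarrow> c x = c' x) \<Longrightarrow> ip I a c = ip I a' c'"
  by (simp add: ip_def)

lemma ip_proj_general:
  assumes "finite R"
  shows "ip I (proj I R b z) y = (\<Sum>r\<in>R. ip I z (b r) * ip I (b r) y)"
proof -
  have "ip I (proj I R b z) y = (\<Sum>x\<in>I. \<Sum>r\<in>R. ip I z (b r) * (b r x * y x))"
    unfolding ip_def proj_def by (simp add: sum_distrib_right mult.assoc)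
  also have "\<dots> = (\<Sum>r\<in>R. \<Sum>x\<in>I. ip I z (b r) * (b r x * y x))"
    by (rule sum.swap)
  also have "\<dots> = (\<Sum>r\<in>R. ip I z (b r) * ip I (b r) y)"
    by (simp add: ip_def sum_distrib_left)
  finally show ?thesis .
qed

lemma ip_proj_basis:
  assumes "finite R" "orthon I R b" "t \<in> R"
  shows "ip I (proj I R b z) (b t) = ip I z (b t)"
proof -
  have "ip I (proj I R b z) (b t) = (\<Sum>r\<in>R. if r = t then ip I z (b r) else 0)"
    using assms unfolding ip_proj_general[OF assms(1)] orthon_def by (intro sum.cong) auto
  also have "\<dots> = ip I z (b t)" using assms by (simp add: sum.delta')
  finally show ?thesis .
qed

lemma norm_proj:
  assumes "finite R" "orthon I R b"
  shows "ip I (proj I R b z) (proj I R b z) = (\<Sum>r\<in>R. (ip I z (b r))\<^sup>2)"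
  "ip I z (proj I R b z) = (\<Sum>r\<in>R. (ip I z (b r))\<^sup>2)"
proof -
  have "ip I (proj I R b z) (proj I R b z) = (\<Sum>r\<in>R. ip I z (b r) * ip I (b r) (proj I R b z))"
    by (rule ip_proj_general[OF assms(1)])
  also have "\<dots> = (\<Sum>r\<in>R. (ip I z (b r))\<^sup>2)"
    using ip_proj_basis[OF assms] by (intro sum.cong refl) (simp add: ip_comm[of I "b _"] power2_eq_square)
  finally show "ip I (proj I R b z) (proj I R b z) = (\<Sum>r\<in>R. (ip I z (b r))\<^sup>2)" .
  show "ip I z (proj I R b z) = (\<Sum>r\<in>R. (ip I z (b r))\<^sup>2)"
    using ip_proj_general[OF assms(1), of I b z z] by (simp add: ip_comm power2_eq_square)
qed

lemma ip_self_nonneg: "ip I a a \<ge> 0"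
  by (simp add: ip_def sum_nonneg)

lemma ip_sq_ident: "ip I (\<lambda>x. a x - c x) (\<lambda>x. a x - c x) = ip I a a - 2 * ip I a c + ip I c c"
proof -
  have "ip I (\<lambda>x. a x - c x) (\<lambda>x. a x - c x) = (\<Sum>x\<in>I. (a x * a x + c x * c x) - 2 * (a x * c x))"
    unfolding ip_def by (intro sum.cong refl) (simp add: algebra_simps)
  also have "\<dots> = ip I a a - 2 * ip I a c + ip I c c"
    unfolding ip_def by (simp add: sum_subtractf sum.distrib sum_distrib_left[symmetric])
  finally show ?thesis .
qed

lemma bessel:
  assumes "finite R" "orthon I R b"
  shows "(\<Sum>r\<in>R. (ip I z (b r))\<^sup>2) \<le> ip I z z"
    and "ip I (\<lambda>x. z x - proj I R b z x) (\<lambda>x. z x - proj I R b z x) \<le> ip I z z"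
proof -
  have e: "ip I (\<lambda>x. z x - proj I R b z x) (\<lambda>x. z x - proj I R b z x) = ip I z z - (\<Sum>r\<in>R. (ip I z (b r))\<^sup>2)"
    using ip_sq_ident[of I z "proj I R b z"] norm_proj[OF assms, of z] by simp
  have "0 \<le> ip I (\<lambda>x. z x - proj I R b z x) (\<lambda>x. z x - proj I R b z x)" by (rule ip_self_nonneg)
  then show "(\<Sum>r\<in>R. (ip I z (b r))\<^sup>2) \<le> ip I z z" using e by linarith
  show "ip I (\<lambda>x. z x - proj I R b z x) (\<lambda>x. z x - proj I R b z x) \<le> ip I z z"
  proof -
    have "0 \<le> (\<Sum>r\<in>R. (ip I z (b r))\<^sup>2)" by (rule sum_nonneg) simp
    then show ?thesis using e by linarith
  qed
qed

lemma cs_ip: "(ip I a c)\<^sup>2 \<le> ip I a a * ip I c c"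
  unfolding ip_def using Cauchy_Schwarz_ineq_sum[of a c I] by (simp add: power2_eq_square)

lemma ip_E_proj:
  assumes "finite R" "orthon I R b"
  shows "(ip I e (proj I R b z))\<^sup>2 \<le> ip I z z * (\<Sum>r\<in>R. (ip I e (b r))\<^sup>2)"
proof -
  have "ip I e (proj I R b z) = (\<Sum>r\<in>R. ip I z (b r) * ip I (b r) e)"
    by (subst ip_comm) (rule ip_proj_general[OF assms(1)])
  then have "(ip I e (proj I R b z))\<^sup>2 \<le> (\<Sum>r\<in>R. (ip I z (b r))\<^sup>2) * (\<Sum>r\<in>R. (ip I (b r) e)\<^sup>2)"
    using Cauchy_Schwarz_ineq_sum[of "\<lambda>r. ip I z (b r)" "\<lambda>r. ip I (b r) e" R] by simp
  also have "\<dots> = (\<Sum>r\<in>R. (ip I z (b r))\<^sup>2) * (\<Sum>r\<in>R. (ip I e (b r))\<^sup>2)"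
    by (simp add: ip_comm[of I "b _" e])
  also have "\<dots> \<le> ip I z z * (\<Sum>r\<in>R. (ip I e (b r))\<^sup>2)"
    by (rule mult_right_mono[OF bessel(1)[OF assms]]) (simp add: sum_nonneg)
  finally show ?thesis .
qed

lemma proj_diff: "proj I R b (\<lambda>x. a x - c x) x = proj I R b a x - proj I R b c x"
  unfolding proj_def ip_diff_left by (simp add: sum_subtractf left_diff_distrib)

lemma proj_span:
  assumes "finite R" "orthon I R b" "\<And>x. x \<in> I \<Longrightarrow> w x = (\<Sum>r\<in>R. c r * b r x)" "x \<in> I"
  shows "proj I R b w x = w x"
proof -
  have "ip I w (b t) = c t" if t: "t \<in> R" for t
  proof -
    have "ip I w (b t) = ip I (\<lambda>x. \<Sum>r\<in>R. c r * b r x) (b t)"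
      using assms(3) by (intro ip_cong) auto
    also have "\<dots> = (\<Sum>r\<in>R. c r * ip I (b r) (b t))"
      unfolding ip_def by (simp add: sum_distrib_right sum_distrib_left sum.swap[of _ I] algebra_simps)
    also have "\<dots> = (\<Sum>r\<in>R. if r = t then c r else 0)"
      using assms(2) t unfolding orthon_def by (intro sum.cong) auto
    also have "\<dots> = c t" using assms(1) t by (subst sum.delta) auto
    finally show ?thesis .
  qed
  then have "proj I R b w x = (\<Sum>r\<in>R. c r * b r x)" unfolding proj_def
    by (intro sum.cong refl) simp
  with assms(3)[OF assms(4)] show ?thesis by linarith
qed

lemma sq_sum_bound:
  fixes D a b q1 q2 :: real
  assumes "D \<le> 2 * (a + b)" "a\<^sup>2 \<le> D * q1" "b\<^sup>2 \<le> D * q2" "D \<ge> 0" "q1 \<ge> 0" "q2 \<ge> 0"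
  shows "D \<le> 8 * (q1 + q2)"
proof (cases "D = 0")
  case True then show ?thesis using assms by simp
next
  case False
  then have Dp: "D > 0" using assms by simp
  have "a + b \<ge> 0" using assms(1,4) by simp
  then have "D\<^sup>2 \<le> (2 * (a + b))\<^sup>2" using assms(1,4) by (intro power_mono) auto
  also have "\<dots> \<le> 8 * (a\<^sup>2 + b\<^sup>2)"
    using sum_squares_ge_zero[of "a - b" 0] by (simp add: power2_eq_square algebra_simps)
  also have "\<dots> \<le> 8 * (D * q1 + D * q2)" using assms by simp
  finally have "D * D \<le> D * (8 * (q1 + q2))" by (simp add: power2_eq_square algebra_simps)
  then show ?thesis using Dp by simp
qed

lemma det_bound:
  fixes E th ts :: "'i \<Rightarrow> real"
  assumes fI: "finite I" and fR: "finite R" and orth: "orthon I R b"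
    and span: "\<And>x. x \<in> I \<Longrightarrow> proj I R b th x = th x"
    and basic: "ip I (\<lambda>x. th x - ts x) (\<lambda>x. th x - ts x) \<le> 2 * ip I E (\<lambda>x. th x - ts x)"
  defines "u \<equiv> (\<lambda>x. ts x - proj I R b ts x)"
  shows "ip I (\<lambda>x. th x - ts x) (\<lambda>x. th x - ts x)
     \<le> 8 * ((\<Sum>r\<in>R. (ip I E (b r))\<^sup>2) + (ip I E u)\<^sup>2 / ip I u u)"
proof -
  define d where "d = (\<lambda>x. th x - ts x)"
  define D where "D = ip I d d"
  define pd where "pd = proj I R b d"
  have pd_eq: "x \<in> I \<Longrightarrow> d x - pd x = - u x" for x
    unfolding pd_def d_def u_def using span[of x] by (simp add: proj_diff)
  have split: "ip I E d = ip I E pd - ip I E u"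
  proof -
    have "ip I E d = ip I E (\<lambda>x. pd x - u x)"
      using pd_eq by (intro ip_cong) (auto simp: algebra_simps)
    then show ?thesis
      by (simp add: ip_comm[of I E] ip_diff_left)
  qed
  have a2: "(ip I E pd)\<^sup>2 \<le> D * (\<Sum>r\<in>R. (ip I E (b r))\<^sup>2)"
    unfolding pd_def D_def by (rule ip_E_proj[OF fR orth])
  have uu: "ip I u u \<le> D"
  proof -
    have "ip I u u = ip I (\<lambda>x. d x - pd x) (\<lambda>x. d x - pd x)"
      unfolding ip_def by (intro sum.cong refl) (simp add: pd_eq)
    also have "\<dots> \<le> D" unfolding D_def pd_def by (rule bessel(2)[OF fR orth])
    finally show ?thesis .
  qed
  have b2: "(- ip I E u)\<^sup>2 \<le> D * ((ip I E u)\<^sup>2 / ip I u u)"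
  proof (cases "ip I u u = 0")
    case True
    then have "(ip I E u)\<^sup>2 \<le> 0" using cs_ip[of I E u] by simp
    then show ?thesis by simp
  next
    case False
    then have up: "ip I u u > 0" using ip_self_nonneg[of I u] by linarith
    have "(ip I E u)\<^sup>2 = ip I u u * ((ip I E u)\<^sup>2 / ip I u u)" using up by simp
    also have "\<dots> \<le> D * ((ip I E u)\<^sup>2 / ip I u u)"
      using uu up by (intro mult_right_mono) auto
    finally show ?thesis by simp
  qed
  have "D \<le> 8 * ((\<Sum>r\<in>R. (ip I E (b r))\<^sup>2) + (ip I E u)\<^sup>2 / ip I u u)"
  proof (rule sq_sum_bound[OF _ a2 b2])
    show "D \<le> 2 * (ip I E pd + - ip I E u)" using basic split unfolding D_def d_def by simp
    show "0 \<le> D" unfolding D_def by (rule ip_self_nonneg)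
    show "0 \<le> (\<Sum>r\<in>R. (ip I E (b r))\<^sup>2)" by (rule sum_nonneg) simp
    show "0 \<le> (ip I E u)\<^sup>2 / ip I u u" by (intro divide_nonneg_nonneg ip_self_nonneg) simp
  qed
  then show ?thesis unfolding D_def d_def .
qed

abbreviation N1 :: "real measure" where "N1 \<equiv> density lborel std_normal_density"

lemma nn_normal_one: "s > 0 \<Longrightarrow> (\<integral>\<^sup>+x. ennreal (normal_density m s x) \<partial>lborel) = 1"
  by (subst nn_integral_eq_integral) (auto intro: normal_density_nonneg integrable_normal_density integral_normal_density)

lemma mgf_std_normal: "(\<integral>\<^sup>+x. ennreal (exp (t * x)) \<partial>N1) = ennreal (exp (t\<^sup>2/2))"
proof -
  have eq: "std_normal_density x * exp (t * x) = exp (t\<^sup>2/2) * normal_density t 1 x" for x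
  proof -
    have "exp (- x\<^sup>2 / 2) * exp (t * x) = exp (t\<^sup>2/2) * exp (- (x - t)\<^sup>2 / 2)"
      by (simp add: exp_add[symmetric] power2_eq_square algebra_simps diff_divide_distrib add_divide_distrib)
    then show ?thesis unfolding std_normal_density_def normal_density_def by simp
  qed
  have "(\<integral>\<^sup>+x. ennreal (exp (t * x)) \<partial>N1) = (\<integral>\<^sup>+x. ennreal (std_normal_density x) * ennreal (exp (t * x)) \<partial>lborel)"
    by (simp add: nn_integral_density)
  also have "\<dots> = (\<integral>\<^sup>+x. ennreal (exp (t\<^sup>2/2)) * ennreal (normal_density t 1 x) \<partial>lborel)"
    by (intro nn_integral_cong) (simp add: eq ennreal_mult[symmetric] del: ennreal_mult')
  also have "\<dots> = ennreal (exp (t\<^sup>2/2))"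
    by (subst nn_integral_cmult) (auto simp: nn_normal_one)
  finally show ?thesis .
qed

lemma sq_std_normal: "(\<integral>\<^sup>+x. ennreal (exp (x\<^sup>2/4)) \<partial>N1) = ennreal (sqrt 2)"
proof -
  have eq: "std_normal_density x * exp (x\<^sup>2/4) = sqrt 2 * normal_density 0 (sqrt 2) x" for x
  proof -
    have "exp (- x\<^sup>2 / 2) * exp (x\<^sup>2/4) = exp (- x\<^sup>2 / 4)"
      by (simp add: exp_add[symmetric])
    moreover have "sqrt (2 * pi * 2) = sqrt 2 * sqrt (2*pi)"
      by (simp add: real_sqrt_mult)
    ultimately show ?thesis unfolding std_normal_density_def normal_density_def
      by (simp add: field_simps)
  qed
  have "(\<integral>\<^sup>+x. ennreal (exp (x\<^sup>2/4)) \<partial>N1) = (\<integral>\<^sup>+x. ennreal (std_normal_density x) * ennreal (exp (x\<^sup>2/4)) \<partial>lborel)"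
    by (simp add: nn_integral_density)
  also have "\<dots> = (\<integral>\<^sup>+x. ennreal (sqrt 2) * ennreal (normal_density 0 (sqrt 2) x) \<partial>lborel)"
    by (intro nn_integral_cong) (simp add: eq ennreal_mult[symmetric] del: ennreal_mult')
  also have "\<dots> = ennreal (sqrt 2)"
    by (subst nn_integral_cmult) (auto simp: nn_normal_one)
  finally show ?thesis .
qed

abbreviation GM :: "'i set \<Rightarrow> ('i \<Rightarrow> real) measure" where "GM I \<equiv> PiM I (\<lambda>_. N1)"

lemma prob_N1: "prob_space N1"
  using prob_space_normal_density by simp

interpretation N1P: product_sigma_finite "\<lambda>_::'i. N1"
  unfolding product_sigma_finite_def using prob_N1 prob_space_imp_sigma_finite by blast

lemma mgf_lin:
  fixes a :: "'i \<Rightarrow> real"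
  assumes "finite I"
  shows "(\<integral>\<^sup>+X. ennreal (exp (\<Sum>x\<in>I. a x * X x)) \<partial>GM I) = ennreal (exp ((\<Sum>x\<in>I. (a x)\<^sup>2)/2))"
proof -
  have "(\<integral>\<^sup>+X. ennreal (exp (\<Sum>x\<in>I. a x * X x)) \<partial>GM I) = (\<integral>\<^sup>+X. (\<Prod>x\<in>I. ennreal (exp (a x * X x))) \<partial>GM I)"
    by (intro nn_integral_cong) (simp add: exp_sum[OF assms] prod_ennreal)
  also have "\<dots> = (\<Prod>x\<in>I. (\<integral>\<^sup>+y. ennreal (exp (a x * y)) \<partial>N1))"
    by (rule N1P.product_nn_integral_prod[OF assms]) simp
  also have "\<dots> = (\<Prod>x\<in>I. ennreal (exp ((a x)\<^sup>2/2)))"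
    by (simp add: mgf_std_normal)
  also have "\<dots> = ennreal (exp ((\<Sum>x\<in>I. (a x)\<^sup>2)/2))"
    by (simp add: prod_ennreal exp_sum[OF assms] sum_divide_distrib)
  finally show ?thesis .
qed

lemma sq_prod:
  assumes "finite R"
  shows "(\<integral>\<^sup>+g. ennreal (exp ((\<Sum>r\<in>R. (g r)\<^sup>2)/4)) \<partial>GM R) = ennreal (sqrt 2 ^ card R)"
proof -
  have "(\<integral>\<^sup>+g. ennreal (exp ((\<Sum>r\<in>R. (g r)\<^sup>2)/4)) \<partial>GM R) = (\<integral>\<^sup>+g. (\<Prod>r\<in>R. ennreal (exp ((g r)\<^sup>2/4))) \<partial>GM R)"
    by (intro nn_integral_cong) (simp add: exp_sum[OF assms] prod_ennreal sum_divide_distrib)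
  also have "\<dots> = (\<Prod>r\<in>R. (\<integral>\<^sup>+y. ennreal (exp (y\<^sup>2/4)) \<partial>N1))"
    by (rule N1P.product_nn_integral_prod[OF assms]) simp
  also have "\<dots> = ennreal (sqrt 2 ^ card R)"
    by (simp add: sq_std_normal ennreal_power)
  finally show ?thesis .
qed

lemma prob_GM: "prob_space (GM I)"
  by (intro prob_space_PiM prob_N1)

lemma orth_sum:
  fixes b :: "'r \<Rightarrow> 'i \<Rightarrow> real"
  assumes "finite I" "finite R"
    and orth: "\<And>r t. r \<in> R \<Longrightarrow> t \<in> R \<Longrightarrow> (\<Sum>x\<in>I. b r x * b t x) = (if r = t then 1 else 0)"
  shows "(\<Sum>x\<in>I. (\<Sum>r\<in>R. c r * b r x)\<^sup>2) = (\<Sum>r\<in>R. (c r)\<^sup>2)"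
proof -
  have "(\<Sum>x\<in>I. (\<Sum>r\<in>R. c r * b r x)\<^sup>2) = (\<Sum>x\<in>I. \<Sum>r\<in>R. \<Sum>t\<in>R. c r * c t * (b r x * b t x))"
    by (simp add: power2_eq_square sum_product algebra_simps)
  also have "\<dots> = (\<Sum>r\<in>R. \<Sum>t\<in>R. c r * c t * (\<Sum>x\<in>I. b r x * b t x))"
    by (simp add: sum_distrib_left sum.swap[of _ I] )
  also have "\<dots> = (\<Sum>r\<in>R. \<Sum>t\<in>R. if t = r then c r * c t else 0)"
    by (intro sum.cong refl) (simp add: orth)
  also have "\<dots> = (\<Sum>r\<in>R. (c r)\<^sup>2)"
    using assms(2) by (simp add: sum.delta power2_eq_square)
  finally show ?thesis .
qed

lemma quad_mgf:
  fixes b :: "'r \<Rightarrow> 'i \<Rightarrow> real"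
  assumes fI: "finite I" and fR: "finite R"
    and orth: "\<And>r t. r \<in> R \<Longrightarrow> t \<in> R \<Longrightarrow> (\<Sum>x\<in>I. b r x * b t x) = (if r = t then 1 else 0)"
  shows "(\<integral>\<^sup>+X. ennreal (exp ((\<Sum>r\<in>R. (\<Sum>x\<in>I. b r x * X x)\<^sup>2)/4)) \<partial>GM I) = ennreal (sqrt 2 ^ card R)"
proof -
  interpret P: pair_sigma_finite "GM I" "GM R"
    by (intro pair_sigma_finite.intro prob_space_imp_sigma_finite prob_GM)
  define f where "f = (\<lambda>(X::'i\<Rightarrow>real, g::'r\<Rightarrow>real). ennreal (exp (\<Sum>r\<in>R. ((\<Sum>x\<in>I. b r x * X x) / sqrt 2) * g r)))"
  have fm: "f \<in> borel_measurable (GM I \<Otimes>\<^sub>M GM R)"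
    unfolding f_def by measurable
  have s1: "ennreal (exp ((\<Sum>r\<in>R. (y r)\<^sup>2)/4)) = (\<integral>\<^sup>+g. ennreal (exp (\<Sum>r\<in>R. (y r / sqrt 2) * g r)) \<partial>GM R)" for y :: "'r \<Rightarrow> real"
  proof -
    have "(\<Sum>r\<in>R. (y r / sqrt 2)\<^sup>2) / 2 = (\<Sum>r\<in>R. (y r)\<^sup>2)/4"
      by (simp add: power_divide sum_divide_distrib[symmetric])
    then show ?thesis using mgf_lin[OF fR, of "\<lambda>r. y r / sqrt 2"] by simp
  qed
  have "(\<integral>\<^sup>+X. ennreal (exp ((\<Sum>r\<in>R. (\<Sum>x\<in>I. b r x * X x)\<^sup>2)/4)) \<partial>GM I)
      = (\<integral>\<^sup>+X. (\<integral>\<^sup>+g. f (X, g) \<partial>GM R) \<partial>GM I)"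
    by (intro nn_integral_cong) (simp add: s1 f_def)
  also have "\<dots> = (\<integral>\<^sup>+g. (\<integral>\<^sup>+X. f (X, g) \<partial>GM I) \<partial>GM R)"
    by (rule P.Fubini[OF fm, symmetric])
  also have "\<dots> = (\<integral>\<^sup>+g. ennreal (exp ((\<Sum>r\<in>R. (g r)\<^sup>2)/4)) \<partial>GM R)"
  proof (intro nn_integral_cong)
    fix g :: "'r \<Rightarrow> real"
    have "(\<integral>\<^sup>+X. f (X, g) \<partial>GM I) = (\<integral>\<^sup>+X. ennreal (exp (\<Sum>x\<in>I. (\<Sum>r\<in>R. (g r / sqrt 2) * b r x) * X x)) \<partial>GM I)"
      unfolding f_def
      by (intro nn_integral_cong) (simp add: sum_distrib_left sum_distrib_right sum_divide_distrib sum.swap[of _ R] algebra_simps)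
    also have "\<dots> = ennreal (exp ((\<Sum>x\<in>I. (\<Sum>r\<in>R. (g r / sqrt 2) * b r x)\<^sup>2)/2))"
      by (rule mgf_lin[OF fI])
    also have "\<dots> = ennreal (exp ((\<Sum>r\<in>R. (g r)\<^sup>2)/4))"
      by (simp add: orth_sum[OF fI fR orth] power_divide sum_divide_distrib[symmetric])
    finally show "(\<integral>\<^sup>+X. f (X, g) \<partial>GM I) = ennreal (exp ((\<Sum>r\<in>R. (g r)\<^sup>2)/4))" .
  qed
  also have "\<dots> = ennreal (sqrt 2 ^ card R)"
    by (rule sq_prod[OF fR])
  finally show ?thesis .
qed

lemma ln_bound_aux:
  fixes y a :: real assumes "a > 0"
  shows "y/4 \<le> ln a + exp (y/4) / a"
proof -
  have "ln (exp (y/4) / a) \<le> exp (y/4) / a - 1"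
    by (rule ln_le_minus_one) (use assms in simp)
  moreover have "ln (exp (y/4) / a) = y/4 - ln a" using assms by (simp add: ln_div)
  ultimately show ?thesis by linarith
qed

lemma max_bound:
  fixes Q :: "'a \<Rightarrow> 'b \<Rightarrow> real" and F :: "'b \<Rightarrow> real" and M :: "'b measure"
  assumes P: "prob_space M" and fA: "finite A" and neA: "A \<noteq> {}" and B: "B \<ge> 1"
    and Qm: "\<And>a. a \<in> A \<Longrightarrow> Q a \<in> borel_measurable M"
    and Qe: "\<And>a. a \<in> A \<Longrightarrow> (\<integral>\<^sup>+X. ennreal (exp (Q a X / 4)) \<partial>M) \<le> ennreal B"
    and FQ: "\<And>X. X \<in> space M \<Longrightarrow> \<exists>a\<in>A. F X \<le> Q a X"
  shows "(\<integral>\<^sup>+X. ennreal (F X) \<partial>M) \<le> ennreal (4 * (ln (real (card A) * B) + 1))"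
proof -
  interpret prob_space M by (rule P)
  define c where "c = real (card A) * B"
  have c1: "c \<ge> 1"
  proof -
    have "real (card A) \<ge> 1" using fA neA by (simp add: Suc_leI card_gt_0_iff)
    from mult_mono[OF this B] show ?thesis by (simp add: c_def)
  qed
  then have c0: "c > 0" by simp
  have lnc: "ln c \<ge> 0" using c1 by simp
  have pt: "ennreal (F X) \<le> ennreal (4 * ln c) + (\<Sum>a\<in>A. ennreal (4 / c * exp (Q a X / 4)))" if X: "X \<in> space M" for X
  proof -
    obtain a where a: "a \<in> A" "F X \<le> Q a X" using FQ[OF X] by blast
    have "F X \<le> 4 * ln c + 4 / c * exp (Q a X / 4)"
    proof -
      have h: "Q a X / 4 \<le> ln c + exp (Q a X / 4) / c" by (rule ln_bound_aux[OF c0])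
      have "4 / c * exp (Q a X / 4) = 4 * (exp (Q a X / 4) / c)" by simp
      then show ?thesis using h a(2) by linarith
    qed
    also have "4 / c * exp (Q a X / 4) \<le> (\<Sum>a\<in>A. 4 / c * exp (Q a X / 4))"
      by (rule member_le_sum) (use a fA c0 in auto)
    finally have "F X \<le> 4 * ln c + (\<Sum>a\<in>A. 4 / c * exp (Q a X / 4))" by simp
    then have "ennreal (F X) \<le> ennreal (4 * ln c + (\<Sum>a\<in>A. 4 / c * exp (Q a X / 4)))"
      by (rule ennreal_leI)
    also have "\<dots> = ennreal (4 * ln c) + (\<Sum>a\<in>A. ennreal (4 / c * exp (Q a X / 4)))"
      using lnc c0 by (simp add: ennreal_plus[symmetric] sum_nonneg del: ennreal_plus)
    finally show ?thesis .
  qed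
  have "(\<integral>\<^sup>+X. ennreal (F X) \<partial>M) \<le> (\<integral>\<^sup>+X. ennreal (4 * ln c) + (\<Sum>a\<in>A. ennreal (4 / c * exp (Q a X / 4))) \<partial>M)"
    by (rule nn_integral_mono) (rule pt)
  also have "\<dots> = ennreal (4 * ln c) + (\<Sum>a\<in>A. (\<integral>\<^sup>+X. ennreal (4 / c * exp (Q a X / 4)) \<partial>M))"
    using Qm by (subst nn_integral_add) (auto simp: nn_integral_sum emeasure_space_1)
  also have "\<dots> \<le> ennreal (4 * ln c) + (\<Sum>a\<in>A. ennreal (4 / c) * ennreal B)"
  proof -
    have "(\<integral>\<^sup>+X. ennreal (4 / c * exp (Q a X / 4)) \<partial>M) \<le> ennreal (4 / c) * ennreal B" if "a \<in> A" for a
    proof -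
      have "(\<integral>\<^sup>+X. ennreal (4 / c * exp (Q a X / 4)) \<partial>M) = ennreal (4 / c) * (\<integral>\<^sup>+X. ennreal (exp (Q a X / 4)) \<partial>M)"
      proof -
        have "\<And>X. ennreal (4 / c * exp (Q a X / 4)) = ennreal (4 / c) * ennreal (exp (Q a X / 4))"
          using c0 by (intro ennreal_mult) auto
        moreover have "(\<lambda>X. ennreal (exp (Q a X / 4))) \<in> borel_measurable M"
          using Qm[OF that] by measurable
        ultimately show ?thesis by (simp only: nn_integral_cmult)
      qed
      also have "\<dots> \<le> ennreal (4 / c) * ennreal B"
        by (intro mult_left_mono Qe that) simp
      finally show ?thesis .
    qed
    then show ?thesis by (intro add_left_mono sum_mono) auto
  qed
  also have "\<dots> = ennreal (4 * ln c + real (card A) * (4 / c * B))"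
  proof -
    have "(\<Sum>a\<in>A. ennreal (4 / c) * ennreal B) = (\<Sum>a\<in>A. ennreal (4 / c * B))"
      using c0 B by (intro sum.cong refl) (simp add: ennreal_mult[symmetric])
    also have "\<dots> = ennreal (\<Sum>a\<in>A. 4 / c * B)"
      using c0 B by (intro sum_ennreal) simp
    also have "\<dots> = ennreal (real (card A) * (4 / c * B))" by simp
    finally show ?thesis using lnc c0 B by (simp add: ennreal_plus[symmetric] del: ennreal_plus)
  qed
  also have "real (card A) * (4 / c * B) = 4"
    using c0 B fA neA unfolding c_def by (simp add: field_simps card_gt_0_iff)
  finally show ?thesis unfolding c_def by (simp add: algebra_simps)
qed

definition hof :: "nat \<Rightarrow> (nat \<Rightarrow> nat \<Rightarrow> real) \<Rightarrow> nat \<Rightarrow> nat" where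
  "hof K L i = (THE k. k < K \<and> L i k = 1)"

lemma assign_unique:
  assumes "assign_mat n K L" "i < n"
  shows "hof K L i < K" "L i (hof K L i) = 1" "\<And>k. k < K \<Longrightarrow> L i k = (if k = hof K L i then 1 else 0)"
proof -
  have c: "card {k. k < K \<and> L i k = 1} = 1" and z: "\<And>k. k < K \<Longrightarrow> L i k = 0 \<or> L i k = 1"
    using assms unfolding assign_mat_def by blast+
  from c obtain k0 where k0: "{k. k < K \<and> L i k = 1} = {k0}" by (rule card_1_singletonE)
  then have k0p: "k0 < K" "L i k0 = 1" by auto
  have uniq: "\<And>k. k < K \<Longrightarrow> L i k = 1 \<Longrightarrow> k = k0" using k0 by auto
  have h: "hof K L i = k0" unfolding hof_def
    by (rule the_equality) (use k0p uniq in blast)+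
  show "hof K L i < K" "L i (hof K L i) = 1" using h k0p by auto
  show "L i k = (if k = hof K L i then 1 else 0)" if "k < K" for k
  proof (cases "k = k0")
    case True then show ?thesis using h k0p by simp
  next
    case False then have "L i k \<noteq> 1" using uniq[OF that] by blast
    then show ?thesis using z[OF that] h False by simp
  qed
qed

lemma fitted_assign:
  assumes "assign_mat n K L" "i < n"
  shows "fitted K mu L j i = mu j (hof K L i)"
proof -
  have "fitted K mu L j i = (\<Sum>k<K. if k = hof K L i then mu j k else 0)"
    unfolding fitted_def by (intro sum.cong refl) (simp add: assign_unique(3)[OF assms])
  also have "\<dots> = mu j (hof K L i)" using assign_unique(1)[OF assms] by simp
  finally show ?thesis .
qed

definition vec :: "(nat \<Rightarrow> nat \<Rightarrow> real) \<Rightarrow> nat \<times> nat \<Rightarrow> real" where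
  "vec A = (\<lambda>(j, i). A j i)"

lemma frob2_ip: "frob2 p n A = ip ({..<p} \<times> {..<n}) (vec A) (vec A)"
  unfolding frob2_def ip_def vec_def
  by (simp add: sum.cartesian_product power2_eq_square case_prod_beta)

definition G :: "nat \<Rightarrow> (nat \<Rightarrow> nat) \<Rightarrow> nat \<Rightarrow> nat set" where
  "G n h k = {i. i < n \<and> h i = k}"

definition bas :: "nat \<Rightarrow> (nat \<Rightarrow> nat) \<Rightarrow> nat \<times> nat \<Rightarrow> nat \<times> nat \<Rightarrow> real" where
  "bas n h = (\<lambda>(j, k) (j', i). if j' = j \<and> i \<in> G n h k then 1 / sqrt (real (card (G n h k))) else 0)"

lemma sum_indic:
  assumes "finite I" "S \<subseteq> I"
  shows "(\<Sum>x\<in>I. if x \<in> S then c else 0) = c * real (card S)"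
proof -
  have "(\<Sum>x\<in>I. if x \<in> S then c else 0) = sum (\<lambda>_. c) (I \<inter> S)"
    using sum.inter_restrict[OF assms(1), of "\<lambda>_. c" S] by simp
  also have "I \<inter> S = S" using assms by auto
  finally show ?thesis by simp
qed

lemma bas_orthon:
  assumes T: "T \<subseteq> {..<p}"
  shows "orthon ({..<p} \<times> {..<n}) (T \<times> h ` {..<n}) (bas n h)"
  unfolding orthon_def
proof (intro ballI)
  fix r t assume r: "r \<in> T \<times> h ` {..<n}" and t: "t \<in> T \<times> h ` {..<n}"
  obtain j k where rjk: "r = (j, k)" by (cases r)
  obtain j' k' where tjk: "t = (j', k')" by (cases t)
  have jp: "j < p" and kin: "k \<in> h ` {..<n}" using r T rjk by auto
  have Gne: "card (G n h k) > 0"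
  proof -
    obtain i where "i < n" "h i = k" using kin by auto
    then have "i \<in> G n h k" unfolding G_def by auto
    moreover have "finite (G n h k)" unfolding G_def by auto
    ultimately show ?thesis by (auto simp: card_gt_0_iff)
  qed
  let ?I = "{..<p} \<times> {..<n}"
  show "ip ?I (bas n h r) (bas n h t) = (if r = t then 1 else 0)"
  proof (cases "r = t")
    case True
    have "ip ?I (bas n h r) (bas n h t) = (\<Sum>x\<in>?I. if x \<in> {j} \<times> G n h k then 1 / real (card (G n h k)) else 0)"
      unfolding ip_def True[symmetric]
    proof (intro sum.cong refl)
      fix x :: "nat \<times> nat"
      obtain a c where x: "x = (a, c)" by (cases x)
      show "bas n h r x * bas n h r x = (if x \<in> {j} \<times> G n h k then 1 / real (card (G n h k)) else 0)"
        unfolding x rjk bas_def using Gne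
        by (cases "a = j \<and> c \<in> G n h k") (auto simp: real_sqrt_mult[symmetric])
    qed
    also have "\<dots> = 1 / real (card (G n h k)) * real (card ({j} \<times> G n h k))"
      by (rule sum_indic) (use jp in \<open>auto simp: G_def\<close>)
    also have "\<dots> = 1" using Gne by (simp add: card_cartesian_product)
    finally show ?thesis using True by simp
  next
    case False
    have "ip ?I (bas n h r) (bas n h t) = (\<Sum>x\<in>?I. 0)"
      unfolding ip_def
    proof (intro sum.cong refl)
      fix x :: "nat \<times> nat"
      obtain a c where x: "x = (a, c)" by (cases x)
      have "\<not> (a = j \<and> c \<in> G n h k \<and> a = j' \<and> c \<in> G n h k')"
        using False unfolding rjk tjk G_def by auto
      then show "bas n h r x * bas n h t x = 0"
        unfolding x rjk tjk bas_def by auto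
    qed
    then show ?thesis using False by simp
  qed
qed

lemma span_fitted:
  assumes am: "assign_mat n K Lh" and hh: "\<And>i. i < n \<Longrightarrow> h i = hof K Lh i"
    and x: "x \<in> {..<p} \<times> {..<n}"
  shows "vec (fitted K muh Lh) x =
     (\<Sum>r\<in>supp_rows p K muh \<times> h ` {..<n}. (muh (fst r) (snd r) * sqrt (real (card (G n h (snd r))))) * bas n h r x)"
proof -
  obtain j i where xji: "x = (j, i)" by (cases x)
  have jp: "j < p" and ilt: "i < n" using x xji by auto
  have hK: "h i < K" using assign_unique(1)[OF am ilt] hh[OF ilt] by simp
  have lhs: "vec (fitted K muh Lh) x = muh j (h i)"
    unfolding xji vec_def using fitted_assign[OF am ilt] hh[OF ilt] by simp
  have tm: "(muh (fst r) (snd r) * sqrt (real (card (G n h (snd r))))) * bas n h r x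
      = (if r = (j, h i) then muh j (h i) else 0)" for r
  proof -
    obtain j' k where r: "r = (j', k)" by (cases r)
    show ?thesis
    proof (cases "j = j' \<and> h i = k")
      case True
      then have iG: "i \<in> G n h k" unfolding G_def using ilt by auto
      have "finite (G n h k)" unfolding G_def by simp
      then have "card (G n h k) > 0" using iG by (auto simp: card_gt_0_iff)
      then show ?thesis using True iG unfolding r xji bas_def by simp
    next
      case False
      then have "\<not> (j = j' \<and> i \<in> G n h k)" unfolding G_def by auto
      then show ?thesis using False unfolding r xji bas_def by auto
    qed
  qed
  have "(\<Sum>r\<in>supp_rows p K muh \<times> h ` {..<n}. (muh (fst r) (snd r) * sqrt (real (card (G n h (snd r))))) * bas n h r x)
      = (\<Sum>r\<in>supp_rows p K muh \<times> h ` {..<n}. if r = (j, h i) then muh j (h i) else 0)"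
    by (intro sum.cong refl tm)
  also have "\<dots> = (if (j, h i) \<in> supp_rows p K muh \<times> h ` {..<n} then muh j (h i) else 0)"
  proof -
    have "finite (supp_rows p K muh \<times> h ` {..<n})" unfolding supp_rows_def by simp
    then show ?thesis by (subst sum.delta) auto
  qed
  also have "\<dots> = muh j (h i)"
  proof (cases "j \<in> supp_rows p K muh")
    case True then show ?thesis using ilt by auto
  next
    case False
    then have "muh j (h i) = 0" using jp hK unfolding supp_rows_def by auto
    then show ?thesis by simp
  qed
  finally show ?thesis using lhs by simp
qed

lemma card_Tset: "card {T. T \<subseteq> {..<p} \<and> card T \<le> s} \<le> Suc p ^ s"
proof -
  let ?F = "{..<s} \<rightarrow>\<^sub>E {..<Suc p}"
  have sub: "{T. T \<subseteq> {..<p} \<and> card T \<le> s} \<subseteq> (\<lambda>f. f ` {..<s} \<inter> {..<p}) ` ?F"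
  proof
    fix T assume "T \<in> {T. T \<subseteq> {..<p} \<and> card T \<le> s}"
    then have T: "T \<subseteq> {..<p}" "card T \<le> s" by auto
    have fT: "finite T" using T(1) finite_subset by blast
    obtain e where e: "bij_betw e {0..<card T} T" using ex_bij_betw_nat_finite[OF fT] by blast
    define f where "f = (\<lambda>i. if i < s then (if i < card T then e i else p) else undefined)"
    have eT: "\<And>i. i < card T \<Longrightarrow> e i \<in> T" using bij_betwE[OF e] by simp
    have fF: "f \<in> ?F"
    proof (rule PiE_I)
      fix i assume "i \<in> {..<s}"
      show "f i \<in> {..<Suc p}"
      proof (cases "i < card T")
        case True then have "e i \<in> {..<p}" using eT T(1) by blast
        then show ?thesis using True \<open>i \<in> {..<s}\<close> unfolding f_def by simp
      next
        case False then show ?thesis using \<open>i \<in> {..<s}\<close> unfolding f_def by simp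
      qed
    next
      fix i assume "i \<notin> {..<s}"
      then show "f i = undefined" unfolding f_def by simp
    qed
    have "f ` {..<s} \<inter> {..<p} = T"
    proof
      show "f ` {..<s} \<inter> {..<p} \<subseteq> T"
      proof
        fix y assume y: "y \<in> f ` {..<s} \<inter> {..<p}"
        then obtain i where i: "y = f i" "i \<in> {..<s}" by blast
        show "y \<in> T"
        proof (cases "i < card T")
          case True then show ?thesis using i eT unfolding f_def by simp
        next
          case False then have "y = p" using i unfolding f_def by simp
          then show ?thesis using y by simp
        qed
      qed
      show "T \<subseteq> f ` {..<s} \<inter> {..<p}"
      proof
        fix t assume t: "t \<in> T"
        have "t \<in> e ` {0..<card T}" using e t by (simp add: bij_betw_def)
        then obtain i where i': "t = e i" "i \<in> {0..<card T}" by (rule imageE)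
        then have i: "i \<in> {0..<card T}" "e i = t" by simp_all
        then have "f i = t" "i < s" unfolding f_def using T by auto
        then show "t \<in> f ` {..<s} \<inter> {..<p}" using t T(1) by force
      qed
    qed
    then show "T \<in> (\<lambda>f. f ` {..<s} \<inter> {..<p}) ` ?F" using fF by force
  qed
  have "card {T. T \<subseteq> {..<p} \<and> card T \<le> s} \<le> card ((\<lambda>f. f ` {..<s} \<inter> {..<p}) ` ?F)"
    by (rule card_mono[OF _ sub]) (simp add: finite_PiE)
  also have "\<dots> \<le> card ?F" by (rule card_image_le) (simp add: finite_PiE)
  also have "\<dots> = Suc p ^ s" by (simp add: card_PiE)
  finally show ?thesis .
qed

lemma qf_meas:
  fixes b :: "'r \<Rightarrow> 'i \<Rightarrow> real"
  shows "(\<lambda>X. \<Sum>r\<in>R. (ip I (b r) X)\<^sup>2) \<in> borel_measurable (GM I)"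
proof -
  have comp: "(\<lambda>X. X x) \<in> borel_measurable (GM I)" if "x \<in> I" for x
  proof -
    have m: "(\<lambda>X. X x) \<in> measurable (GM I) ((\<lambda>_. N1) x)"
      by (rule measurable_component_singleton[OF that])
    have "sets N1 = sets borel" by simp
    then have "measurable (GM I) N1 = measurable (GM I) borel"
      by (intro measurable_cong_sets refl)
    then show ?thesis using m by simp
  qed
  have lin: "(\<lambda>X. \<Sum>x\<in>I. b r x * X x) \<in> borel_measurable (GM I)" for r
  proof (rule borel_measurable_sum)
    fix x assume "x \<in> I"
    then show "(\<lambda>X. b r x * X x) \<in> borel_measurable (GM I)"
      by (intro borel_measurable_times borel_measurable_const comp)
  qed
  show ?thesis unfolding ip_def
    by (intro borel_measurable_sum borel_measurable_power lin)
qed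

lemma ln_ge1: "real m \<ge> 3 \<Longrightarrow> ln (real m) \<ge> 1"
proof -
  assume "real m \<ge> 3"
  then have "exp 1 \<le> real m" using exp_le by linarith
  then have "ln (exp 1) \<le> ln (real m)" by (rule ln_mono) simp
  then show ?thesis by simp
qed

lemma arith_final:
  fixes p s K n :: nat and C :: real
  assumes n3: "n \<ge> 3" and p3: "p \<ge> 3" and sp: "s > 0" and Kp: "K > 0" and C: "C > 0"
    and KC: "real K * ln (real n) \<le> C * ln (real p)"
  shows "64 * (ln (2 * real (Suc p ^ s) * real (K ^ n) * sqrt 2 ^ (s*K)) + 1)
     \<le> 64 * (4 + C) * (real n * ln (real K) + real s * ln (real p))"
proof -
  have lnp: "ln (real p) \<ge> 1" using p3 by (intro ln_ge1) simp
  have lnn: "ln (real n) \<ge> 1" using n3 by (intro ln_ge1) simp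
  have lnK: "ln (real K) \<ge> 0" using Kp by simp
  have Kle: "real K \<le> C * ln (real p)"
  proof -
    have "real K * 1 \<le> real K * ln (real n)" using lnn by (intro mult_left_mono) auto
    then show ?thesis using KC by simp
  qed
  have eq: "ln (2 * real (Suc p ^ s) * real (K ^ n) * sqrt 2 ^ (s*K))
      = ln 2 + real s * ln (real (Suc p)) + real n * ln (real K) + real (s*K) * ln (sqrt 2)"
    using Kp by (simp add: ln_mult ln_realpow del: of_nat_Suc)
  have l2: "ln (2::real) \<le> 1" using ln_le_minus_one[of 2] by simp
  have ls2: "ln (sqrt 2) \<le> 1" using ln_le_minus_one[of "sqrt 2"] real_sqrt_le_iff[of 2 4] by simp
  have lsp: "ln (real (Suc p)) \<le> 2 * ln (real p)"
  proof -
    have rp: "real p \<ge> 3" using p3 by simp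
    have "3 * real p \<le> real p * real p" using rp by (intro mult_right_mono) auto
    then have "1 + real p \<le> real p * real p" using rp by linarith
    then have "real (Suc p) \<le> real p ^ 2" by (simp add: power2_eq_square)
    then have "ln (real (Suc p)) \<le> ln (real p ^ 2)" by (intro ln_mono) auto
    then show ?thesis by (simp add: ln_realpow)
  qed
  have s1: "real s \<ge> 1" using sp by simp
  have t1: "real s * ln (real (Suc p)) \<le> real s * (2 * ln (real p))"
    using lsp by (intro mult_left_mono) auto
  have t2: "real (s*K) * ln (sqrt 2) \<le> real s * (C * ln (real p))"
  proof -
    have "real (s*K) * ln (sqrt 2) \<le> real (s*K) * 1"
      using ls2 by (intro mult_left_mono) auto
    also have "\<dots> = real s * real K" by simp
    also have "\<dots> \<le> real s * (C * ln (real p))" using Kle by (intro mult_left_mono) auto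
    finally show ?thesis .
  qed
  have t3: "2 \<le> 2 * (real s * ln (real p))"
  proof -
    have "1 * 1 \<le> real s * ln (real p)" using s1 lnp by (intro mult_mono) auto
    then show ?thesis by simp
  qed
  have "ln (2 * real (Suc p ^ s) * real (K ^ n) * sqrt 2 ^ (s*K)) + 1
      \<le> (4 + C) * (real s * ln (real p)) + real n * ln (real K)"
    unfolding eq using l2 t1 t2 t3 by (simp add: algebra_simps)
  also have "\<dots> \<le> (4 + C) * (real n * ln (real K) + real s * ln (real p))"
  proof -
    have "real n * ln (real K) \<le> (4 + C) * (real n * ln (real K))"
      using mult_right_mono[of 1 "4+C" "real n * ln (real K)"] C lnK by simp
    then show ?thesis by (simp add: algebra_simps)
  qed
  finally have h: "ln (2 * real (Suc p ^ s) * real (K ^ n) * sqrt 2 ^ (s*K)) + 1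
      \<le> (4 + C) * (real n * ln (real K) + real s * ln (real p))" .
  have "64 * (ln (2 * real (Suc p ^ s) * real (K ^ n) * sqrt 2 ^ (s*K)) + 1)
      \<le> 64 * ((4 + C) * (real n * ln (real K) + real s * ln (real p)))"
    by (rule mult_left_mono[OF h]) simp
  then show ?thesis by (simp only: mult.assoc)
qed

lemma risk_fixed:
  fixes est :: "(nat \<Rightarrow> nat \<Rightarrow> real) \<Rightarrow> (nat \<Rightarrow> nat \<Rightarrow> real) \<times> (nat \<Rightarrow> nat \<Rightarrow> real)"
  assumes cm: "is_cmle n p s K est" and th: "(mu, L) \<in> ThetaK n p s K"
    and sp: "s > 0" and Kp: "K > 0"
    and meas: "risk_loss n p K est mu L \<in> borel_measurable (noise p n)"
  shows "(\<integral>\<^sup>+E. ennreal (risk_loss n p K est mu L E) \<partial>noise p n)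
     \<le> ennreal (64 * (ln (2 * real (Suc p ^ s) * real (K ^ n) * sqrt 2 ^ (s*K)) + 1))"
proof -
  define I where "I = {..<p} \<times> {..<n}"
  have fI: "finite I" unfolding I_def by simp
  define ts where "ts = vec (fitted K mu L)"
  define Tset where "Tset = {T. T \<subseteq> {..<p} \<and> card T \<le> s}"
  define Hset where "Hset = {..<n} \<rightarrow>\<^sub>E {..<K}"
  define A where "A = (Tset \<times> Hset) \<times> (UNIV :: bool set)"
  define R1 where "R1 = (\<lambda>(T::nat set) (h::nat\<Rightarrow>nat). T \<times> h ` {..<n})"
  define uu where "uu = (\<lambda>T h x. ts x - proj I (R1 T h) (bas n h) ts x)"
  define R2 where "R2 = (\<lambda>T h. if ip I (uu T h) (uu T h) = 0 then {} else {(0::nat, 0::nat)})"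
  define b2 where "b2 = (\<lambda>T h (r::nat\<times>nat) x. uu T h x / sqrt (ip I (uu T h) (uu T h)))"
  define RR where "RR = (\<lambda>((T, h), fl). if fl then R1 T h else R2 T h)"
  define BB where "BB = (\<lambda>((T, h), fl). if fl then bas n h else b2 T h)"
  define Q where "Q = (\<lambda>a X. \<Sum>r\<in>RR a. (ip I (BB a r) X)\<^sup>2)"
  define B where "B = sqrt 2 ^ (s * K)"
  define F where "F = (\<lambda>X. risk_loss n p K est mu L X / 16)"
  have noise_eq: "noise p n = GM I" unfolding noise_def I_def by simp
  have fTset: "finite Tset" unfolding Tset_def
    by (rule finite_subset[of _ "Pow {..<p}"]) auto
  have fHset: "finite Hset" unfolding Hset_def by (simp add: finite_PiE)
  have fA: "finite A" unfolding A_def using fTset fHset by simp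
  have neA: "A \<noteq> {}"
  proof -
    have "{} \<in> Tset" unfolding Tset_def by simp
    moreover have "(\<lambda>i\<in>{..<n}. 0) \<in> Hset" unfolding Hset_def using Kp by auto
    ultimately show ?thesis unfolding A_def by blast
  qed
  have B1: "B \<ge> 1" unfolding B_def by (rule one_le_power) simp
  have Qm: "Q a \<in> borel_measurable (GM I)" if "a \<in> A" for a
    unfolding Q_def by (rule qf_meas)
  have Qe: "(\<integral>\<^sup>+X. ennreal (exp (Q a X / 4)) \<partial>GM I) \<le> ennreal B" if a: "a \<in> A" for a
  proof -
    obtain T h fl where aeq: "a = ((T, h), fl)" by (metis prod.collapse)
    have T: "T \<subseteq> {..<p}" "card T \<le> s" and h: "h \<in> Hset" using a unfolding aeq A_def Tset_def by auto
    have hK: "h ` {..<n} \<subseteq> {..<K}" using h unfolding Hset_def by auto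
    have fT: "finite T" using T(1) finite_subset by blast
    have ob: "finite (RR a) \<and> orthon I (RR a) (BB a) \<and> card (RR a) \<le> s * K"
    proof (cases fl)
      case True
      have c1: "card (h ` {..<n}) \<le> K" using card_mono[OF _ hK] by simp
      have "card (T \<times> h ` {..<n}) \<le> s * K"
        unfolding card_cartesian_product using T(2) c1 by (intro mult_le_mono) auto
      then show ?thesis using True bas_orthon[OF T(1), of n h] fT
        unfolding RR_def BB_def aeq R1_def I_def by simp
    next
      case False
      have o2: "orthon I (R2 T h) (b2 T h)"
      proof (cases "ip I (uu T h) (uu T h) = 0")
        case True then show ?thesis unfolding orthon_def R2_def by simp
      next
        case False
        then have pos: "ip I (uu T h) (uu T h) > 0" using ip_self_nonneg[of I "uu T h"] by simp
        have "ip I (b2 T h r) (b2 T h r) = ip I (uu T h) (uu T h) / (sqrt (ip I (uu T h) (uu T h)))\<^sup>2" for r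
          unfolding b2_def ip_def by (simp add: sum_divide_distrib power2_eq_square)
        then have "ip I (b2 T h r) (b2 T h r) = 1" for r using pos by simp
        then show ?thesis unfolding orthon_def R2_def using False by simp
      qed
      have "card (R2 T h) \<le> s * K" unfolding R2_def using sp Kp by (simp add: Suc_leI)
      moreover have "finite (R2 T h)" unfolding R2_def by simp
      ultimately show ?thesis using False o2 unfolding RR_def BB_def aeq by simp
    qed
    have "(\<integral>\<^sup>+X. ennreal (exp (Q a X / 4)) \<partial>GM I) = ennreal (sqrt 2 ^ card (RR a))"
      unfolding Q_def ip_def using quad_mgf[OF fI, of "RR a" "BB a"] ob unfolding orthon_def ip_def by simp
    also have "\<dots> \<le> ennreal B" unfolding B_def
      using ob by (intro ennreal_leI power_increasing) auto
    finally show ?thesis .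
  qed
  have FQ: "\<exists>a\<in>A. F X \<le> Q a X" for X
  proof -
    define Y where "Y = observe K mu L X"
    define muh where "muh = fst (est Y)"
    define Lh where "Lh = snd (est Y)"
    have estTh: "(muh, Lh) \<in> ThetaK n p s K" using cm unfolding is_cmle_def muh_def Lh_def by simp
    have am: "assign_mat n K Lh" and cT: "card (supp_rows p K muh) \<le> s"
      using estTh unfolding ThetaK_def by auto
    define T0 where "T0 = supp_rows p K muh"
    define h0 where "h0 = restrict (hof K Lh) {..<n}"
    have T0s: "T0 \<in> Tset" unfolding T0_def Tset_def supp_rows_def using cT by (auto simp: supp_rows_def)
    have h0s: "h0 \<in> Hset" unfolding h0_def Hset_def using assign_unique(1)[OF am] by auto
    define th where "th = vec (fitted K muh Lh)"
    have hh: "\<And>i. i < n \<Longrightarrow> h0 i = hof K Lh i" unfolding h0_def by simp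
    have fR1: "finite (R1 T0 h0)" unfolding R1_def T0_def supp_rows_def by simp
    have orth1: "orthon I (R1 T0 h0) (bas n h0)"
      unfolding R1_def I_def by (rule bas_orthon) (simp add: T0_def supp_rows_def subset_iff)
    have span: "proj I (R1 T0 h0) (bas n h0) th x = th x" if x: "x \<in> I" for x
    proof (rule proj_span[OF fR1 orth1 _ x])
      fix y assume y: "y \<in> I"
      have yI: "y \<in> {..<p} \<times> {..<n}" using y unfolding I_def .
      show "th y = (\<Sum>r\<in>R1 T0 h0. (muh (fst r) (snd r) * sqrt (real (card (G n h0 (snd r))))) * bas n h0 r y)"
        unfolding th_def R1_def T0_def by (rule span_fitted[OF am hh yI])
    qed
    have basic: "ip I (\<lambda>x. th x - ts x) (\<lambda>x. th x - ts x) \<le> 2 * ip I X (\<lambda>x. th x - ts x)"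
    proof -
      have "frob2 p n (\<lambda>j i. Y j i - fitted K muh Lh j i) \<le> frob2 p n (\<lambda>j i. Y j i - fitted K mu L j i)"
        using cm th unfolding is_cmle_def muh_def Lh_def by blast
      moreover have "frob2 p n (\<lambda>j i. Y j i - fitted K muh Lh j i) = ip I (\<lambda>x. X x - (th x - ts x)) (\<lambda>x. X x - (th x - ts x))"
        unfolding frob2_ip I_def[symmetric]
        by (intro ip_cong) (auto simp: vec_def Y_def observe_def th_def ts_def I_def)
      moreover have "frob2 p n (\<lambda>j i. Y j i - fitted K mu L j i) = ip I X X"
        unfolding frob2_ip I_def[symmetric]
        by (intro ip_cong) (auto simp: vec_def Y_def observe_def I_def)
      ultimately have "ip I (\<lambda>x. X x - (th x - ts x)) (\<lambda>x. X x - (th x - ts x)) \<le> ip I X X" by simp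
      then show ?thesis unfolding ip_sq_ident by simp
    qed
    have det: "ip I (\<lambda>x. th x - ts x) (\<lambda>x. th x - ts x)
       \<le> 8 * ((\<Sum>r\<in>R1 T0 h0. (ip I X (bas n h0 r))\<^sup>2) + (ip I X (uu T0 h0))\<^sup>2 / ip I (uu T0 h0) (uu T0 h0))"
      using det_bound[OF fI fR1 orth1 span basic] unfolding uu_def by simp
    have q1: "Q ((T0, h0), True) X = (\<Sum>r\<in>R1 T0 h0. (ip I X (bas n h0 r))\<^sup>2)"
      unfolding Q_def RR_def BB_def by (simp add: ip_comm)
    have q2: "Q ((T0, h0), False) X = (ip I X (uu T0 h0))\<^sup>2 / ip I (uu T0 h0) (uu T0 h0)"
    proof (cases "ip I (uu T0 h0) (uu T0 h0) = 0")
      case True then show ?thesis unfolding Q_def RR_def BB_def R2_def by simp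
    next
      case False
      have "ip I (b2 T0 h0 (0,0)) X = ip I (uu T0 h0) X / sqrt (ip I (uu T0 h0) (uu T0 h0))"
        unfolding b2_def ip_def by (simp add: sum_divide_distrib)
      then show ?thesis using False ip_self_nonneg[of I "uu T0 h0"]
        unfolding Q_def RR_def BB_def R2_def by (simp add: power_divide ip_comm)
    qed
    have loss: "risk_loss n p K est mu L X = ip I (\<lambda>x. th x - ts x) (\<lambda>x. th x - ts x)"
      unfolding risk_loss_def Let_def frob2_ip I_def[symmetric] Y_def[symmetric] muh_def[symmetric] Lh_def[symmetric]
      unfolding ip_def by (intro sum.cong refl) (auto simp: vec_def th_def ts_def power2_eq_square algebra_simps)
    have "F X \<le> max (Q ((T0, h0), True) X) (Q ((T0, h0), False) X)"
    proof -
      have aux: "D / 16 \<le> max a b" if "D \<le> 8 * (a + b)" for D a b :: real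
        using that by (cases "a \<le> b") (simp_all add: max_def)
      show ?thesis unfolding F_def loss q1 q2 by (rule aux[OF det])
    qed
    then show ?thesis using T0s h0s unfolding A_def by (auto simp: max_def split: if_splits)
  qed
  have mb: "(\<integral>\<^sup>+X. ennreal (F X) \<partial>GM I) \<le> ennreal (4 * (ln (real (card A) * B) + 1))"
    by (rule max_bound[OF prob_GM fA neA B1 Qm Qe FQ])
  have Fm: "F \<in> borel_measurable (GM I)" unfolding F_def using meas noise_eq by simp
  have cardA: "real (card A) * B \<le> 2 * real (Suc p ^ s) * real (K ^ n) * B"
  proof -
    have cH: "card Hset = K ^ n" unfolding Hset_def by (simp add: card_PiE)
    have "card A = card Tset * card Hset * 2" unfolding A_def by (simp add: card_cartesian_product)
    also have "\<dots> \<le> Suc p ^ s * K ^ n * 2" unfolding cH Tset_def using card_Tset[of p s] by simp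
    finally have "real (card A) \<le> real (Suc p ^ s * K ^ n * 2)" by (simp only: of_nat_le_iff)
    then have "real (card A) \<le> 2 * real (Suc p ^ s) * real (K ^ n)" by (simp only: of_nat_mult mult_ac)
    then show ?thesis using B1 by (intro mult_right_mono) auto
  qed
  have cApos: "real (card A) * B > 0" using fA neA B1 by (simp add: card_gt_0_iff)
  have lnA: "ln (real (card A) * B) \<ge> 0"
  proof -
    have "real (card A) \<ge> 1" using fA neA by (simp add: Suc_leI card_gt_0_iff)
    then have "real (card A) * B \<ge> 1" using B1 mult_mono[of 1 "real (card A)" 1 B] by simp
    then show ?thesis by simp
  qed
  have "(\<integral>\<^sup>+E. ennreal (risk_loss n p K est mu L E) \<partial>noise p n) = (\<integral>\<^sup>+X. ennreal 16 * ennreal (F X) \<partial>GM I)"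
    unfolding noise_eq
  proof (intro nn_integral_cong)
    fix X
    have nn: "risk_loss n p K est mu L X \<ge> 0"
      unfolding risk_loss_def Let_def frob2_def by (intro sum_nonneg) simp
    have "ennreal 16 * ennreal (F X) = ennreal (16 * F X)"
      using nn unfolding F_def by (intro ennreal_mult[symmetric]) auto
    then show "ennreal (risk_loss n p K est mu L X) = ennreal 16 * ennreal (F X)"
      unfolding F_def by simp
  qed
  also have "\<dots> = ennreal 16 * (\<integral>\<^sup>+X. ennreal (F X) \<partial>GM I)"
    using Fm by (intro nn_integral_cmult) simp
  also have "\<dots> \<le> ennreal 16 * ennreal (4 * (ln (real (card A) * B) + 1))"
    by (intro mult_left_mono mb) simp
  also have "\<dots> = ennreal (64 * (ln (real (card A) * B) + 1))"
  proof -
    have "ennreal 16 * ennreal (4 * (ln (real (card A) * B) + 1)) = ennreal (16 * (4 * (ln (real (card A) * B) + 1)))"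
      using lnA by (intro ennreal_mult[symmetric]) auto
    then show ?thesis by simp
  qed
  also have "\<dots> \<le> ennreal (64 * (ln (2 * real (Suc p ^ s) * real (K ^ n) * sqrt 2 ^ (s*K)) + 1))"
    unfolding B_def[symmetric] using ln_mono[OF cardA cApos] by (intro ennreal_leI) simp
  finally show ?thesis .
qed


theorem theorem3:
  fixes p s K :: "nat \<Rightarrow> nat" and C0 c0 :: real
  assumes "C0 > 0" and "c0 > 0"
    and "\<And>n. p n > 0" and "\<And>n. s n > 0" and "\<And>n. K n > 0"
    and "filterlim (\<lambda>n. real (s n)) at_top sequentially"
    and "\<exists>C>0. \<forall>n. real (K n) * ln (real n) \<le> C * ln (real (p n))"
    and "filterlim (\<lambda>n. real (p n) / real n) at_top sequentially"
  shows "\<exists>c>0. \<forall>\<^sub>F n in sequentially.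
           \<forall>est mu L. is_cmle n (p n) (s n) (K n) est
             \<longrightarrow> (risk_loss n (p n) (K n) est mu L) \<in> borel_measurable (noise (p n) n)
             \<longrightarrow> (mu, L) \<in> ThetaStar C0 c0 n (p n) (s n) (K n)
             \<longrightarrow> (\<integral>\<^sup>+ E. ennreal (risk_loss n (p n) (K n) est mu L E) \<partial>noise (p n) n)
                 \<le> ennreal (c * (real n * ln (real (K n)) + real (s n) * ln (real (p n))))"
proof -
  obtain C where C: "C > 0" "\<And>n. real (K n) * ln (real n) \<le> C * ln (real (p n))"
    using assms(7) by blast
  define c where "c = 64 * (4 + C)"
  have cpos: "c > 0" unfolding c_def using C(1) by simp
  have ev1: "\<forall>\<^sub>F n in sequentially. 1 \<le> real (p n) / real n"
    using assms(8) unfolding filterlim_at_top by blast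
  have ev2: "\<forall>\<^sub>F n in sequentially. 3 \<le> n"
    by (rule eventually_ge_at_top)
  have "\<forall>\<^sub>F n in sequentially.
           \<forall>est mu L. is_cmle n (p n) (s n) (K n) est
             \<longrightarrow> (risk_loss n (p n) (K n) est mu L) \<in> borel_measurable (noise (p n) n)
             \<longrightarrow> (mu, L) \<in> ThetaStar C0 c0 n (p n) (s n) (K n)
             \<longrightarrow> (\<integral>\<^sup>+ E. ennreal (risk_loss n (p n) (K n) est mu L E) \<partial>noise (p n) n)
                 \<le> ennreal (c * (real n * ln (real (K n)) + real (s n) * ln (real (p n))))"
    using ev1 ev2
  proof (eventually_elim)
    case (elim n)
    have n3: "n \<ge> 3" using elim by simp
    have "real n > 0" using n3 by simp
    then have "real n \<le> real (p n)" using elim(1) by (simp add: le_divide_eq)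
    then have p3: "p n \<ge> 3" using n3 by simp
    show ?case
    proof (intro allI impI)
      fix est mu L
      assume cm: "is_cmle n (p n) (s n) (K n) est"
        and meas: "risk_loss n (p n) (K n) est mu L \<in> borel_measurable (noise (p n) n)"
        and ts: "(mu, L) \<in> ThetaStar C0 c0 n (p n) (s n) (K n)"
      have thK: "(mu, L) \<in> ThetaK n (p n) (s n) (K n)" using ts unfolding ThetaStar_def by simp
      note rf = risk_fixed[OF cm thK assms(4) assms(5) meas]
      have "64 * (ln (2 * real (Suc (p n) ^ s n) * real (K n ^ n) * sqrt 2 ^ (s n * K n)) + 1)
          \<le> c * (real n * ln (real (K n)) + real (s n) * ln (real (p n)))"
        unfolding c_def by (rule arith_final[OF n3 p3 assms(4) assms(5) C(1) C(2)])
      then have "ennreal (64 * (ln (2 * real (Suc (p n) ^ s n) * real (K n ^ n) * sqrt 2 ^ (s n * K n)) + 1))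
          \<le> ennreal (c * (real n * ln (real (K n)) + real (s n) * ln (real (p n))))"
        by (rule ennreal_leI)
      with rf show "(\<integral>\<^sup>+ E. ennreal (risk_loss n (p n) (K n) est mu L E) \<partial>noise (p n) n)
                 \<le> ennreal (c * (real n * ln (real (K n)) + real (s n) * ln (real (p n))))"
        by (rule order_trans)
    qed
  qed
  then show ?thesis using cpos by blast
qed

end
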